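(* Let $\Gamma$ be a $Q$-polynomial distance-regular graph with vertex set $X$ and diameter $D$, and suppose $\Gamma$ is pseudo-vertex-transitive. Then for all integers $0\le i\le D$ and all vertices $x,y\in X$, the $i$-th subconstituents $\Delta_i(x)$ and $\Delta_i(y)$ have the same spectrum.
   Context: Let $\Gamma$ have distance $\partial$, adjacency matrix $A$, $V=\mathbb{C}^X$. For $x\in X$ and $0\le i\le D$, $\Delta_i(x)$ is the subgraph induced on $\{y:\partial(x,y)=i\}$, and $E^*_i(x)$ is the diagonal matrix with $(E^*_i(x))_{yy}=1$ if $\partial(x,y)=i$ and $0$ otherwise. The Terwilliger algebra $T(x)$ is the subalgebra of $\mathrm{Mat}_X(\mathbb{C})$ generated by $A,E^*_0(x),\dots,E^*_D(x)$. $\Gamma$ is pseudo-vertex-transitive if for all $x,y\in X$: (i) there is a $\mathbb{C}$-algebra isomorphism $T(x)\to T(y)$ sending $A\mapsto A$ and $E^*_i(x)\mapsto E^*_i(y)$ for all $i$; and (ii) there is a $\mathbb{C}$-linear bijection $\rho:V\to V$ with $\rho A=A\rho$ and $\rho E^*_i(x)=E^*_i(y)\rho$ for all $i$. The spectrum of a graph is the multiset of eigenvalues of its adjacency matrix. $Q$-polynomial means: the primitive idempotents of the Bose–Mesner algebra can be ordered $E_0,\dots,E_D$ so that the Krein parameters $q^h_{ij}$ (defined by $E_i\circ E_j=|X|^{-1}\sum_h q^h_{ij}E_h$, $\circ$ the entrywise product) vanish when one of $h,i,j$ exceeds the sum of the other two and are nonzero when one equals the sum of the other two. *)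

theory Defs
  imports "HOL-Analysis.Analysis" "HOL-Computational_Algebra.Polynomial"
begin

text \<open>A finite simple graph: vertex set X = UNIV of a finite type 'n, adjacency E
  (symmetric, irreflexive). Matrices in Mat_X(C) are complex^'n^'n; V = C^X.\<close>

type_synonym 'n cmat = "complex ^'n ^'n"

definition simple_graph :: "('n \<Rightarrow> 'n \<Rightarrow> bool) \<Rightarrow> bool" where
  "simple_graph E \<longleftrightarrow> (\<forall>u v. E u v \<longrightarrow> E v u) \<and> (\<forall>u. \<not> E u u)"

definition connected_graph :: "('n \<Rightarrow> 'n \<Rightarrow> bool) \<Rightarrow> bool" where
  "connected_graph E \<longleftrightarrow> (\<forall>u v. \<exists>k. (E ^^ k) u v)"

definition gdist :: "('n \<Rightarrow> 'n \<Rightarrow> bool) \<Rightarrow> 'n \<Rightarrow> 'n \<Rightarrow> nat" where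
  "gdist E u v = (LEAST k. (E ^^ k) u v)"

definition diam :: "('n::finite \<Rightarrow> 'n \<Rightarrow> bool) \<Rightarrow> nat" where
  "diam E = Max {gdist E u v | u v. True}"

definition distance_regular :: "('n::finite \<Rightarrow> 'n \<Rightarrow> bool) \<Rightarrow> bool" where
  "distance_regular E \<longleftrightarrow> simple_graph E \<and> connected_graph E \<and>
     (\<forall>i j x y x' y'. gdist E x y = gdist E x' y' \<longrightarrow>
        card {z. gdist E x z = i \<and> gdist E y z = j} =
        card {z. gdist E x' z = i \<and> gdist E y' z = j})"

definition adj_matrix :: "('n::finite \<Rightarrow> 'n \<Rightarrow> bool) \<Rightarrow> 'n cmat" where
  "adj_matrix E = (\<chi> u v. if E u v then 1 else 0)"

definition cscale :: "complex \<Rightarrow> 'n::finite cmat \<Rightarrow> 'n cmat" where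
  "cscale c M = (\<chi> u v. c * M $ u $ v)"

definition hadamard :: "'n::finite cmat \<Rightarrow> 'n cmat \<Rightarrow> 'n cmat" where
  "hadamard M N = (\<chi> u v. M $ u $ v * N $ u $ v)"

definition dist_matrix :: "('n::finite \<Rightarrow> 'n \<Rightarrow> bool) \<Rightarrow> nat \<Rightarrow> 'n cmat" where
  "dist_matrix E i = (\<chi> u v. if gdist E u v = i then 1 else 0)"

definition bose_mesner :: "('n::finite \<Rightarrow> 'n \<Rightarrow> bool) \<Rightarrow> 'n cmat set" where
  "bose_mesner E = {(\<Sum>i\<le>diam E. cscale (c i) (dist_matrix E i)) | c. True}"

definition primitive_idempotent :: "('n::finite \<Rightarrow> 'n \<Rightarrow> bool) \<Rightarrow> 'n cmat \<Rightarrow> bool" where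
  "primitive_idempotent E M \<longleftrightarrow> M \<in> bose_mesner E \<and> M \<noteq> 0 \<and> M ** M = M \<and>
     (\<forall>F \<in> bose_mesner E. F ** F = F \<and> M ** F = F \<longrightarrow> F = 0 \<or> F = M)"

definition Q_polynomial :: "('n::finite \<Rightarrow> 'n \<Rightarrow> bool) \<Rightarrow> bool" where
  "Q_polynomial E \<longleftrightarrow> distance_regular E \<and>
    (\<exists>(Ei :: nat \<Rightarrow> 'n cmat) (q :: nat \<Rightarrow> nat \<Rightarrow> nat \<Rightarrow> complex).
       bij_betw Ei {..diam E} {M. primitive_idempotent E M} \<and>
       (\<forall>i\<le>diam E. \<forall>j\<le>diam E.
          hadamard (Ei i) (Ei j) =
            cscale (1 / of_nat CARD('n)) (\<Sum>h\<le>diam E. cscale (q h i j) (Ei h))) \<and>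
       (\<forall>h\<le>diam E. \<forall>i\<le>diam E. \<forall>j\<le>diam E.
          (h > i + j \<or> i > h + j \<or> j > h + i) \<longrightarrow> q h i j = 0) \<and>
       (\<forall>h\<le>diam E. \<forall>i\<le>diam E. \<forall>j\<le>diam E.
          (h = i + j \<or> i = h + j \<or> j = h + i) \<longrightarrow> q h i j \<noteq> 0))"

definition dual_idem :: "('n::finite \<Rightarrow> 'n \<Rightarrow> bool) \<Rightarrow> 'n \<Rightarrow> nat \<Rightarrow> 'n cmat" where
  "dual_idem E x i = (\<chi> u v. if u = v \<and> gdist E x u = i then 1 else 0)"

inductive_set terwilliger :: "('n::finite \<Rightarrow> 'n \<Rightarrow> bool) \<Rightarrow> 'n \<Rightarrow> 'n cmat set"
  for E x where
  gen_A: "adj_matrix E \<in> terwilliger E x"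
| gen_Es: "i \<le> diam E \<Longrightarrow> dual_idem E x i \<in> terwilliger E x"
| one: "mat 1 \<in> terwilliger E x"
| add: "M \<in> terwilliger E x \<Longrightarrow> N \<in> terwilliger E x \<Longrightarrow> M + N \<in> terwilliger E x"
| scale: "M \<in> terwilliger E x \<Longrightarrow> cscale c M \<in> terwilliger E x"
| mult: "M \<in> terwilliger E x \<Longrightarrow> N \<in> terwilliger E x \<Longrightarrow> M ** N \<in> terwilliger E x"

definition pseudo_vertex_transitive :: "('n::finite \<Rightarrow> 'n \<Rightarrow> bool) \<Rightarrow> bool" where
  "pseudo_vertex_transitive E \<longleftrightarrow> (\<forall>x y.
     (\<exists>\<phi>. bij_betw \<phi> (terwilliger E x) (terwilliger E y) \<and>
        (\<forall>M\<in>terwilliger E x. \<forall>N\<in>terwilliger E x. \<phi> (M + N) = \<phi> M + \<phi> N) \<and>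
        (\<forall>M\<in>terwilliger E x. \<forall>c. \<phi> (cscale c M) = cscale c (\<phi> M)) \<and>
        (\<forall>M\<in>terwilliger E x. \<forall>N\<in>terwilliger E x. \<phi> (M ** N) = \<phi> M ** \<phi> N) \<and>
        \<phi> (mat 1) = mat 1 \<and>
        \<phi> (adj_matrix E) = adj_matrix E \<and>
        (\<forall>i\<le>diam E. \<phi> (dual_idem E x i) = dual_idem E y i)) \<and>
     (\<exists>R :: 'n cmat. invertible R \<and> R ** adj_matrix E = adj_matrix E ** R \<and>
        (\<forall>i\<le>diam E. R ** dual_idem E x i = dual_idem E y i ** R)))"

text \<open>characteristic polynomial det(tI - A_S) of the principal submatrix on S,
  and the spectrum (multiset of its roots) of the induced subgraph on S\<close>
definition charpoly_on :: "'n::finite cmat \<Rightarrow> 'n set \<Rightarrow> complex poly" where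
  "charpoly_on M S = (\<Sum>p\<in>{p. p permutes S}. of_int (sign p) *
      (\<Prod>u\<in>S. (if p u = u then [:0, 1:] else 0) - [: M $ u $ p u :]))"

definition induced_spectrum :: "('n::finite \<Rightarrow> 'n \<Rightarrow> bool) \<Rightarrow> 'n set \<Rightarrow> complex multiset" where
  "induced_spectrum E S = proots (charpoly_on (adj_matrix E) S)"

definition subconst :: "('n \<Rightarrow> 'n \<Rightarrow> bool) \<Rightarrow> 'n \<Rightarrow> nat \<Rightarrow> 'n set" where
  "subconst E x i = {y. gdist E x y = i}"

end

theory Submission
  imports Defs
begin

definition liftp :: "'n::finite cmat \<Rightarrow> complex poly ^'n^'n" where
  "liftp M = (\<chi> u v. [:M $ u $ v:])"

definition cpol :: "'n::finite cmat \<Rightarrow> complex poly" where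
  "cpol M = det (mat [:0,1:] - liftp M)"

lemma const_poly_add: "[:a + b:] = [:a:] + [:b::'a::comm_ring_1:]"
  by simp

lemma const_poly_sum: "[:sum f S:] = (\<Sum>k\<in>S. [:f k:])"
  by (simp add: sum_to_poly)

lemma mat_sub_l: "(A::'a::comm_ring_1^'n::finite^'n) ** (B - C) = A ** B - A ** C"
  by (simp add: matrix_matrix_mult_def vec_eq_iff sum_subtractf algebra_simps)

lemma mat_sub_r: "((B::'a::comm_ring_1^'n::finite^'n) - C) ** A = B ** A - C ** A"
  by (simp add: matrix_matrix_mult_def vec_eq_iff sum_subtractf algebra_simps)

lemma liftp_mult: "liftp (M ** N) = liftp M ** liftp N"
  unfolding liftp_def matrix_matrix_mult_def
  by (simp add: vec_eq_iff const_poly_sum mult.commute)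

lemma liftp_one: "liftp (mat 1) = mat 1"
  unfolding liftp_def mat_def by (simp add: vec_eq_iff)

lemma mat_comm: "(mat c :: 'a::comm_ring_1^'n::finite^'n) ** B = B ** mat c"
proof -
  have a: "(if i = k then c else 0) * b = (if i = k then c * b else 0)" for i k and b :: 'a by simp
  have b: "b * (if k = j then c else 0) = (if k = j then c * b else 0)" for j k and b :: 'a by (simp add: mult.commute)
  show ?thesis by (simp add: matrix_matrix_mult_def mat_def vec_eq_iff a b)
qed

lemma cpol_similar:
  fixes R Ri M :: "'n::finite cmat"
  assumes "R ** Ri = mat 1" "Ri ** R = mat 1"
  shows "cpol (R ** M ** Ri) = cpol M"
proof -
  let ?t = "mat [:0,1:] :: complex poly^'n^'n"
  have "?t - liftp (R ** M ** Ri) = liftp R ** (?t - liftp M) ** liftp Ri"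
  proof -
    have "liftp R ** ?t ** liftp Ri = ?t ** (liftp R ** liftp Ri)"
      by (metis mat_comm matrix_mul_assoc)
    also have "\<dots> = ?t" using assms by (simp flip: liftp_mult add: liftp_one)
    finally show ?thesis
      by (simp add: liftp_mult mat_sub_l mat_sub_r matrix_mul_assoc)
  qed
  hence "cpol (R ** M ** Ri) = det (liftp R) * cpol M * det (liftp Ri)"
    unfolding cpol_def by (simp add: det_mul)
  also have "det (liftp R) * det (liftp Ri) = 1"
    using assms by (metis det_I det_mul liftp_mult liftp_one)
  ultimately show ?thesis by (metis mult.commute mult.assoc mult_1_right)
qed

definition restr :: "'n::finite cmat \<Rightarrow> 'n set \<Rightarrow> 'n cmat" where
  "restr M S = (\<chi> u v. if u \<in> S \<and> v \<in> S then M $ u $ v else 0)"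

lemma cpol_restr:
  fixes M :: "'n::finite cmat"
  shows "cpol (restr M S) = [:0,1:] ^ card (- S) * charpoly_on M S"
proof -
  let ?X = "[:0,1:] :: complex poly"
  let ?N = "mat ?X - liftp (restr M S)"
  let ?f = "\<lambda>p. of_int (sign p) * (\<Prod>u\<in>UNIV. ?N $ u $ p u)"
  have ent: "?N $ u $ v = (if u = v then ?X else 0) - [:if u \<in> S \<and> v \<in> S then M $ u $ v else 0:]" for u v
    by (simp add: mat_def liftp_def restr_def)
  have "cpol (restr M S) = sum ?f {p. p permutes UNIV}"
    unfolding cpol_def det_def ..
  also have "\<dots> = sum ?f {p. p permutes S}"
  proof (rule sum.mono_neutral_right)
    show "finite {p. p permutes (UNIV::'n set)}" by simp
    show "{p. p permutes S} \<subseteq> {p. p permutes UNIV}"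
      using permutes_subset by blast
    show "\<forall>p\<in>{p. p permutes UNIV} - {p. p permutes S}. ?f p = 0"
    proof
      fix p assume p: "p \<in> {p. p permutes UNIV} - {p. p permutes S}"
      then have pU: "p permutes UNIV" and nS: "\<not> p permutes S" by auto
      obtain u where u: "u \<notin> S" "p u \<noteq> u"
        using nS pU unfolding permutes_def by blast
      have "?N $ u $ p u = 0" unfolding ent using u by simp
      then have "(\<Prod>u\<in>UNIV. ?N $ u $ p u) = 0"
        by (meson UNIV_I finite prod_zero)
      then show "?f p = 0" by simp
    qed
  qed
  also have "\<dots> = (\<Sum>p\<in>{p. p permutes S}. ?X ^ card (- S) * (of_int (sign p) *
      (\<Prod>u\<in>S. (if p u = u then ?X else 0) - [: M $ u $ p u :])))"
  proof (rule sum.cong[OF refl])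
    fix p assume "p \<in> {p. p permutes S}"
    then have p: "p permutes S" by simp
    have split: "(\<Prod>u\<in>UNIV. ?N $ u $ p u) = (\<Prod>u\<in>S. ?N $ u $ p u) * (\<Prod>u\<in>- S. ?N $ u $ p u)"
    proof -
      have "(UNIV::'n set) = S \<union> - S" by auto
      then have "(\<Prod>u\<in>UNIV. ?N $ u $ p u) = (\<Prod>u\<in>S \<union> - S. ?N $ u $ p u)" by simp
      also have "\<dots> = (\<Prod>u\<in>S. ?N $ u $ p u) * (\<Prod>u\<in>- S. ?N $ u $ p u)"
        by (rule prod.union_disjoint) auto
      finally show ?thesis .
    qed
    have c1: "(\<Prod>u\<in>- S. ?N $ u $ p u) = ?X ^ card (- S)"
    proof -
      have "(\<Prod>u\<in>- S. ?N $ u $ p u) = (\<Prod>u\<in>- S. ?X)"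
      proof (rule prod.cong[OF refl])
        fix u assume u: "u \<in> - S"
        then have "p u = u" using p by (simp add: permutes_not_in)
        then show "?N $ u $ p u = ?X" using u by (simp only: ent) simp
      qed
      then show ?thesis by simp
    qed
    have c2: "(\<Prod>u\<in>S. ?N $ u $ p u) = (\<Prod>u\<in>S. (if p u = u then ?X else 0) - [: M $ u $ p u :])"
    proof (rule prod.cong[OF refl])
      fix u assume u: "u \<in> S"
      then have pu: "p u \<in> S" using permutes_in_image[OF p] by simp
      have "(u = p u) = (p u = u)" by auto
      then show "?N $ u $ p u = (if p u = u then ?X else 0) - [: M $ u $ p u :]"
        using u pu by (simp only: ent) simp
    qed
    show "?f p = ?X ^ card (- S) * (of_int (sign p) *
      (\<Prod>u\<in>S. (if p u = u then ?X else 0) - [: M $ u $ p u :]))"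
      unfolding split c1 c2 by (simp only: mult.commute mult.left_commute)
  qed
  also have "\<dots> = ?X ^ card (- S) * charpoly_on M S"
    unfolding charpoly_on_def by (simp add: sum_distrib_left)
  finally show ?thesis .
qed

lemma dual_mult_left: "(dual_idem E x i ** M) $ u $ v = (if u \<in> subconst E x i then M $ u $ v else 0)"
proof -
  have a: "(if u = k \<and> P then 1 else 0) * b = (if k = u then (if P then b else 0) else 0)" for k P and b :: complex
    by auto
  show ?thesis by (simp add: matrix_matrix_mult_def dual_idem_def subconst_def a cong: if_cong)
qed

lemma dual_mult_right: "(M ** dual_idem E x i) $ u $ v = (if v \<in> subconst E x i then M $ u $ v else 0)"
proof -
  have a: "b * (if k = v \<and> P then 1 else 0) = (if k = v then (if P then b else 0) else 0)" for k P and b :: complex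
    by auto
  show ?thesis by (simp add: matrix_matrix_mult_def dual_idem_def subconst_def a cong: if_cong)
qed

lemma dual_restr: "dual_idem E x i ** M ** dual_idem E x i = restr M (subconst E x i)"
  by (simp add: vec_eq_iff dual_mult_left dual_mult_right restr_def)

lemma trace_dual: "trace (dual_idem E x i) = of_nat (card (subconst E x i))"
  by (simp add: trace_def dual_idem_def subconst_def sum.If_cases)

theorem lemma4p7:
  fixes E :: "'n::finite \<Rightarrow> 'n \<Rightarrow> bool" and i :: nat and x y :: 'n
  assumes "Q_polynomial E"
    and "pseudo_vertex_transitive E"
    and "i \<le> diam E"
  shows "induced_spectrum E (subconst E x i) = induced_spectrum E (subconst E y i)"
proof -
  let ?A = "adj_matrix E"
  let ?Ex = "dual_idem E x i" and ?Ey = "dual_idem E y i"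
  obtain R :: "'n cmat" where R: "invertible R" "R ** ?A = ?A ** R"
    "\<forall>i\<le>diam E. R ** dual_idem E x i = dual_idem E y i ** R"
  proof -
    have ex: "\<exists>R :: 'n cmat. invertible R \<and> R ** ?A = ?A ** R \<and>
        (\<forall>i\<le>diam E. R ** dual_idem E x i = dual_idem E y i ** R)"
      using assms(2) unfolding pseudo_vertex_transitive_def by blast
    then show ?thesis using that by blast
  qed
  obtain Ri where Ri: "R ** Ri = mat 1" "Ri ** R = mat 1"
    using R(1) unfolding invertible_def by blast
  have RE: "R ** ?Ex = ?Ey ** R" using R(3) assms(3) by blast
  have "?Ey = ?Ey ** R ** Ri" by (simp only: matrix_mul_assoc[symmetric] Ri(1) matrix_mul_rid)
  also have "\<dots> = R ** ?Ex ** Ri" by (simp add: RE)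
  finally have Ey: "?Ey = R ** ?Ex ** Ri" .
  have "R ** (?Ex ** ?A ** ?Ex) = (R ** ?Ex) ** ?A ** ?Ex" by (simp add: matrix_mul_assoc[symmetric])
  also have "\<dots> = ?Ey ** (R ** ?A) ** ?Ex" by (simp only: RE) (simp add: matrix_mul_assoc[symmetric])
  also have "\<dots> = ?Ey ** ?A ** (R ** ?Ex)" by (simp only: R(2)) (simp add: matrix_mul_assoc[symmetric])
  also have "\<dots> = (?Ey ** ?A ** ?Ey) ** R" by (simp only: RE) (simp add: matrix_mul_assoc[symmetric])
  finally have RM: "R ** (?Ex ** ?A ** ?Ex) = (?Ey ** ?A ** ?Ey) ** R" .
  have "?Ey ** ?A ** ?Ey = (?Ey ** ?A ** ?Ey) ** R ** Ri" by (simp only: matrix_mul_assoc[symmetric] Ri(1) matrix_mul_rid)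
  also have "\<dots> = R ** (?Ex ** ?A ** ?Ex) ** Ri" by (simp only: RM)
  finally have My: "?Ey ** ?A ** ?Ey = R ** (?Ex ** ?A ** ?Ex) ** Ri" .
  have "cpol (?Ey ** ?A ** ?Ey) = cpol (?Ex ** ?A ** ?Ex)"
    unfolding My by (rule cpol_similar[OF Ri])
  then have eq: "[:0,1:] ^ card (- subconst E y i) * charpoly_on ?A (subconst E y i)
      = [:0,1:] ^ card (- subconst E x i) * charpoly_on ?A (subconst E x i)"
    by (simp add: dual_restr cpol_restr)
  have "trace ?Ey = trace ?Ex"
  proof -
    have "trace (R ** ?Ex ** Ri) = trace (Ri ** (R ** ?Ex))" by (rule trace_mul_sym)
    also have "\<dots> = trace ?Ex" by (simp add: matrix_mul_assoc Ri(2))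
    finally show ?thesis using Ey by simp
  qed
  then have "card (subconst E y i) = card (subconst E x i)"
    by (simp add: trace_dual)
  then have "card (- subconst E y i) = card (- subconst E x i)"
    by (simp add: Compl_eq_Diff_UNIV card_Diff_subset)
  with eq have "charpoly_on ?A (subconst E y i) = charpoly_on ?A (subconst E x i)"
    by simp
  then show ?thesis unfolding induced_spectrum_def by simp
qed

end
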